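(* Let $G$ be a finite abelian group with $|G|>1$, let $p(G)$ be the smallest prime dividing $|G|$, and let $S\subset G$ with $|S|\leqslant\log_2p(G)$. Then one can assign to each non-empty subset $X\subseteq S$ an element $s_X\in X$ with the following property. For all non-empty $X,Y\subseteq S$, the only solution of $x+y=s_X+s_Y$ with $x\in X$ and $y\in Y$ is $(x,y)=(s_X,s_Y)$. *)

theory Defs
  imports Complex_Main "HOL-Computational_Algebra.Primes"
begin

definition smallest_prime_factor :: "nat \<Rightarrow> nat" where
  "smallest_prime_factor n = (LEAST p. prime p \<and> p dvd n)"

end

theory Submission
  imports Defs "HOL-Analysis.Analysis"
begin


definition simplev :: "real^'n \<Rightarrow> bool" where
"simplev v \<longleftrightarrow> (\<forall>j. v$j = -1 \<or> v$j = 0 \<or> v$j = 1) \<and> (\<forall>i j. v$i = 1 \<longrightarrow> v$j = 1 \<longrightarrow> i = j)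
   \<and> (\<forall>i j. v$i = -1 \<longrightarrow> v$j = -1 \<longrightarrow> i = j)"

lemma det_leibniz_small:
  fixes A :: "real^'n^'n"
  assumes one: "\<And>i j1 j2. A$i$j1 \<noteq> 0 \<Longrightarrow> A$i$j2 \<noteq> 0 \<Longrightarrow> j1 = j2"
    and bd: "\<And>i j. \<bar>A$i$j\<bar> \<le> 1"
  shows "\<bar>det A\<bar> \<le> 1"
proof -
  let ?P = "{p. p permutes (UNIV::'n set)}"
  let ?f = "\<lambda>p. of_int (sign p) * (\<Prod>i\<in>UNIV. A$i$p i) :: real"
  define Q where "Q = {p\<in>?P. (\<Prod>i\<in>UNIV. A$i$p i) \<noteq> 0}"
  have fP: "finite ?P" by (simp add: finite_permutations)
  have QP: "Q \<subseteq> ?P" unfolding Q_def by auto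
  have "det A = sum ?f ?P" unfolding det_def by simp
  also have "\<dots> = sum ?f Q"
    by (rule sum.mono_neutral_right[OF fP QP]) (auto simp: Q_def)
  finally have d: "det A = sum ?f Q" .
  have cQ: "card Q \<le> 1"
  proof -
    have "\<forall>p\<in>Q. \<forall>q\<in>Q. p = q"
    proof (intro ballI)
      fix p q assume "p \<in> Q" "q \<in> Q"
      then have "\<forall>i. A$i$p i \<noteq> 0" "\<forall>i. A$i$q i \<noteq> 0" unfolding Q_def by auto
      then show "p = q" using one by blast
    qed
    then show ?thesis using card_le_Suc0_iff_eq[of Q] finite_subset[OF QP fP] by auto
  qed
  have "\<bar>sum ?f Q\<bar> \<le> sum (\<lambda>p. \<bar>?f p\<bar>) Q" by (rule sum_abs)
  also have "\<dots> \<le> sum (\<lambda>p. 1) Q"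
  proof (rule sum_mono)
    fix p assume "p \<in> Q"
    have s: "\<bar>of_int (sign p) :: real\<bar> = 1" by (simp add: sign_def)
    have "\<bar>\<Prod>i\<in>UNIV. A$i$p i\<bar> = (\<Prod>i\<in>UNIV. \<bar>A$i$p i\<bar>)" by (simp add: abs_prod)
    also have "\<dots> \<le> 1" by (rule prod_le_1) (auto simp: bd)
    finally show "\<bar>?f p\<bar> \<le> 1" by (simp add: abs_mult s)
  qed
  also have "\<dots> = real (card Q)" by simp
  also have "\<dots> \<le> 1" using cQ by simp
  finally show ?thesis using d by simp
qed

lemma simplev_entry: "simplev v \<Longrightarrow> v$j = -1 \<or> v$j = 0 \<or> v$j = 1"
  unfolding simplev_def by blast

lemma TU:
  fixes A :: "real^'n^'n"
  assumes "\<forall>i. simplev (A$i)"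
  shows "\<bar>det A\<bar> \<le> 1"
  using assms
proof (induction "card {(i,j). A$i$j \<noteq> 0}" arbitrary: A rule: less_induct)
  case (less A)
  have ent: "\<And>i j. A$i$j = -1 \<or> A$i$j = 0 \<or> A$i$j = 1" using less.prems simplev_entry by blast
  have bd: "\<bar>A$i$j\<bar> \<le> 1" for i j using ent[of i j] by auto
  show ?case
  proof (cases "\<exists>i j1 j2. j1 \<noteq> j2 \<and> A$i$j1 \<noteq> 0 \<and> A$i$j2 \<noteq> 0")
    case False
    then show ?thesis using det_leibniz_small[of A] bd by blast
  next
    case True
    define C where "C = {j. \<exists>i j'. j' \<noteq> j \<and> A$i$j' \<noteq> 0 \<and> A$i$j \<noteq> 0}"
    show ?thesis
    proof (cases "\<exists>i j. j \<in> C \<and> A$i$j \<noteq> 0 \<and> (\<forall>j'. j' \<noteq> j \<longrightarrow> A$i$j' = 0)")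
      case True
      then obtain i j where j: "j \<in> C" "A$i$j \<noteq> 0" "\<forall>j'. j' \<noteq> j \<longrightarrow> A$i$j' = 0" by blast
      from j(1) obtain i' j' where i': "j' \<noteq> j" "A$i'$j' \<noteq> 0" "A$i'$j \<noteq> 0" unfolding C_def by blast
      have ii: "i' \<noteq> i" using i' j by auto
      define c where "c = - A$i'$j / A$i$j"
      define A' where "A' = (\<chi> k. if k = i' then row i' A + c *s row i A else row k A)"
      have dA: "det A' = det A" unfolding A'_def by (rule det_row_operation[OF ii])
      have A'e: "A'$k$m = (if k = i' \<and> m = j then 0 else A$k$m)" for k m
        using j(2,3) by (auto simp: A'_def row_def c_def)
      have sA': "\<forall>k. simplev (A'$k)"
        using less.prems unfolding simplev_def A'e by auto
      have s1: "{(k,m). A'$k$m \<noteq> 0} \<subseteq> {(k,m). A$k$m \<noteq> 0}"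
        by (auto simp: A'e split: if_splits)
      have s2: "(i',j) \<in> {(k,m). A$k$m \<noteq> 0}" "(i',j) \<notin> {(k,m). A'$k$m \<noteq> 0}"
        using i'(3) by (simp_all add: A'e)
      have sub: "{(k,m). A'$k$m \<noteq> 0} \<subset> {(k,m). A$k$m \<noteq> 0}"
        using s1 s2 by blast
      have "card {(k,m). A'$k$m \<noteq> 0} < card {(k,m). A$k$m \<noteq> 0}"
        by (rule psubset_card_mono[OF _ sub]) simp
      from less.hyps[OF this sA'] dA show ?thesis by simp
    next
      case False
      define v :: "real^'n" where "v = (\<chi> j. if j \<in> C then 1 else 0)"
      obtain i0 j1 j2 where t: "j1 \<noteq> j2" "A$i0$j1 \<noteq> 0" "A$i0$j2 \<noteq> 0" using True by blast
      have "j1 \<in> C" unfolding C_def using t(1)[symmetric] t(2,3) by blast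
      then have "v$j1 = 1" unfolding v_def by simp
      then have v0: "v \<noteq> 0" by auto
      have Av: "A *v v = 0"
      proof -
        have "(A *v v)$i = 0" for i
        proof -
          have e: "(A *v v)$i = (\<Sum>j\<in>C. A$i$j)"
            unfolding matrix_vector_mult_def v_def
            by (simp add: if_distrib sum.If_cases)
          show ?thesis
          proof (cases "\<exists>k1 k2. k1 \<noteq> k2 \<and> A$i$k1 \<noteq> 0 \<and> A$i$k2 \<noteq> 0")
            case True
            then obtain k1 k2 where k: "k1 \<noteq> k2" "A$i$k1 \<noteq> 0" "A$i$k2 \<noteq> 0" by blast
            have sv: "simplev (A$i)" using less.prems by blast
            have kC: "k1 \<in> C" "k2 \<in> C" unfolding C_def using k(1) k(1)[symmetric] k(2,3) by blast+
            have u1: "\<And>a b. A$i$a = 1 \<Longrightarrow> A$i$b = 1 \<Longrightarrow> a = b"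
              and u2: "\<And>a b. A$i$a = -1 \<Longrightarrow> A$i$b = -1 \<Longrightarrow> a = b"
              and en: "\<And>a. A$i$a = -1 \<or> A$i$a = 0 \<or> A$i$a = 1"
              using sv unfolding simplev_def by blast+
            have vals: "(A$i$k1 = 1 \<and> A$i$k2 = -1) \<or> (A$i$k1 = -1 \<and> A$i$k2 = 1)"
              using en[of k1] en[of k2] k u1[of k1 k2] u2[of k1 k2] by auto
            have only: "A$i$m = 0" if "m \<noteq> k1" "m \<noteq> k2" for m
              using en[of m] vals u1[of m k1] u1[of m k2] u2[of m k1] u2[of m k2] that by auto
            have "(\<Sum>j\<in>C. A$i$j) = (\<Sum>j\<in>{k1,k2}. A$i$j)"
              by (rule sum.mono_neutral_right) (use kC only in auto)
            also have "\<dots> = 0" using k(1) vals by auto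
            finally show ?thesis using e by simp
          next
            case False
            have "A$i$m = 0" if "m \<in> C" for m
            proof (rule ccontr)
              assume nz: "A$i$m \<noteq> 0"
              have "\<forall>j'. j' \<noteq> m \<longrightarrow> A$i$j' = 0" using False nz by blast
              then show False using \<open>\<not> (\<exists>i j. j \<in> C \<and> A$i$j \<noteq> 0 \<and> (\<forall>j'. j' \<noteq> j \<longrightarrow> A$i$j' = 0))\<close> that nz by blast
            qed
            then show ?thesis using e by simp
          qed
        qed
        then show ?thesis by (simp add: vec_eq_iff)
      qed
      have "\<not> invertible A"
      proof
        assume "invertible A"
        then obtain B where "B ** A = mat 1" unfolding invertible_left_inverse by blast
        then have "\<forall>x. A *v x = 0 \<longrightarrow> x = 0" using matrix_left_invertible_ker by blast
        then show False using Av v0 by blast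
      qed
      then have "det A = 0" using invertible_det_nz by blast
      then show ?thesis by simp
    qed
  qed
qed

lemma expand_det:
  fixes u v :: "'n \<Rightarrow> real^'n"
  assumes "finite I" and su: "\<forall>i. simplev (u i)" and sv: "\<forall>i. simplev (v i)"
  shows "(\<forall>i. (i \<in> I \<longrightarrow> A$i = u i + v i) \<and> (i \<notin> I \<longrightarrow> simplev (A$i))) \<Longrightarrow> \<bar>det A\<bar> \<le> 2 ^ card I"
  using assms(1)
proof (induction I arbitrary: A rule: finite_induct)
  case empty
  then show ?case using TU[of A] by simp
next
  case (insert i I)
  let ?A1 = "(\<chi> k. if k = i then u i else A$k) :: real^'n^'n"
  let ?A2 = "(\<chi> k. if k = i then v i else A$k) :: real^'n^'n"
  have AA: "A = (\<chi> k. if k = i then u i + v i else A$k)"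
    using insert.prems by (simp add: vec_eq_iff)
  have "det A = det ?A1 + det ?A2"
    by (subst AA, rule det_row_add[where a = "\<lambda>_. u i" and b = "\<lambda>_. v i" and c = "\<lambda>k. A$k" and k = i])
  moreover have "\<bar>det ?A1\<bar> \<le> 2 ^ card I"
    by (rule insert.IH) (use insert.prems insert.hyps su in auto)
  moreover have "\<bar>det ?A2\<bar> \<le> 2 ^ card I"
    by (rule insert.IH) (use insert.prems insert.hyps sv in auto)
  ultimately show ?case using insert.hyps by simp
qed



lemma det_Ints: fixes A :: "real^'n^'n" shows "\<forall>i j. A$i$j \<in> \<int> \<Longrightarrow> det A \<in> \<int>"
  unfolding det_def by (intro Ints_sum Ints_mult Ints_prod) auto

fun nmul :: "nat \<Rightarrow> 'a::ab_group_add \<Rightarrow> 'a" where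
  "nmul 0 g = 0" | "nmul (Suc n) g = g + nmul n g"

lemma nmul_add: "nmul (m+n) g = nmul m g + nmul n g"
  by (induction m) (simp_all add: add.assoc)
lemma nmul_plus: "nmul n (g+h) = nmul n g + nmul n h"
  by (induction n) (simp_all add: algebra_simps)
lemma nmul_zero[simp]: "nmul n 0 = 0"
  by (induction n) simp_all
lemma nmul_minus: "nmul n (-g) = - nmul n g"
  by (induction n) (simp_all add: algebra_simps)
lemma nmul_diff: "nmul n (g-h) = nmul n g - nmul n h"
  using nmul_plus[of n g "-h"] nmul_minus[of n h] by simp
lemma nmul_mult: "nmul (m*n) g = nmul m (nmul n g)"
  by (induction m) (simp_all add: nmul_add)
lemma nmul_sum_const: "finite A \<Longrightarrow> (\<Sum>x\<in>A. g) = nmul (card A) g"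
  by (induction A rule: finite_induct) simp_all

definition zmul :: "int \<Rightarrow> 'a::ab_group_add \<Rightarrow> 'a" where
  "zmul z g = nmul (nat z) g - nmul (nat (-z)) g"

lemma zmul_repr: "zmul (int a - int b) g = nmul a g - nmul b g"
proof (cases "b \<le> a")
  case True
  then have "nat (int a - int b) = a - b" "nat (-(int a - int b)) = 0" by auto
  moreover have "nmul a g = nmul (a-b) g + nmul b g" using nmul_add[of "a-b" b g] True by simp
  ultimately show ?thesis unfolding zmul_def by simp
next
  case False
  then have "nat (int a - int b) = 0" "nat (-(int a - int b)) = b - a" by auto
  moreover have "nmul b g = nmul (b-a) g + nmul a g" using nmul_add[of "b-a" a g] False by simp
  ultimately show ?thesis unfolding zmul_def by simp
qed

lemma int_split: "(z::int) = int (nat z) - int (nat (-z))" by simp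

lemma zmul_add: "zmul (x+y) g = zmul x g + zmul y g"
proof -
  obtain a b a' b' where x: "x = int a - int b" and y: "y = int a' - int b'" using int_split by blast
  have e: "(int a - int b) + (int a' - int b') = int (a+a') - int (b+b')" by simp
  have "zmul ((int a - int b) + (int a' - int b')) g = zmul (int a - int b) g + zmul (int a' - int b') g"
    unfolding e zmul_repr by (simp add: nmul_add algebra_simps)
  then show ?thesis using x y by simp
qed

lemma zmul_mult: "zmul (x*y) g = zmul x (zmul y g)"
proof -
  obtain a b a' b' where x: "x = int a - int b" and y: "y = int a' - int b'" using int_split by blast
  have e: "(int a - int b) * (int a' - int b') = int (a*a'+b*b') - int (a*b'+b*a')" by (simp add: algebra_simps)
  have "zmul ((int a - int b) * (int a' - int b')) g = zmul (int a - int b) (zmul (int a' - int b') g)"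
    unfolding e zmul_repr by (simp add: nmul_add nmul_diff nmul_mult[symmetric] algebra_simps)
  then show ?thesis using x y by simp
qed

lemma zmul_plus: "zmul z (g+h) = zmul z g + zmul z h"
  unfolding zmul_def by (simp add: nmul_plus algebra_simps)
lemma zmul_zero[simp]: "zmul z 0 = 0"
  unfolding zmul_def by simp
lemma zmul_minus: "zmul z (-g) = - zmul z g"
  unfolding zmul_def by (simp add: nmul_minus)
lemma zmul_diff: "zmul z (g-h) = zmul z g - zmul z h"
  unfolding zmul_def by (simp add: nmul_diff)
lemma zmul_one[simp]: "zmul 1 g = g"
  unfolding zmul_def by simp
lemma zmul_0[simp]: "zmul 0 g = 0"
  unfolding zmul_def by simp
lemma zmul_nat: "zmul (int n) g = nmul n g"
  unfolding zmul_def by simp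
lemma zmul_sum: "zmul z (\<Sum>i\<in>A. f i) = (\<Sum>i\<in>A. zmul z (f i))"
  by (induction A rule: infinite_finite_induct) (simp_all add: zmul_plus)
lemma zmul_sum_left: "zmul (\<Sum>i\<in>A. f i) g = (\<Sum>i\<in>A. zmul (f i) g)"
  by (induction A rule: infinite_finite_induct) (simp_all add: zmul_add)

lemma card_nmul_zero: "nmul CARD('a::{finite,ab_group_add}) (g::'a) = 0"
proof -
  have inj: "inj (\<lambda>h::'a. h+g)" by (auto simp: inj_def)
  have sur: "range (\<lambda>h::'a. h+g) = UNIV"
  proof -
    have "y \<in> range (\<lambda>h::'a. h+g)" for y
      by (rule image_eqI[where x = "y - g"]) auto
    then show ?thesis by blast
  qed
  have "(\<Sum>h\<in>UNIV. h) = (\<Sum>h\<in>range (\<lambda>h::'a. h+g). h)" using sur by simp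
  also have "\<dots> = (\<Sum>h\<in>UNIV. h + g)" using sum.reindex[OF inj, of "\<lambda>h. h"] by simp
  also have "\<dots> = (\<Sum>h\<in>UNIV. h) + (\<Sum>h\<in>(UNIV::'a set). g)" by (simp add: sum.distrib)
  finally show ?thesis using nmul_sum_const[of "UNIV::'a set" g] by simp
qed

lemma no_small_torsion:
  fixes g :: "'a::{finite,ab_group_add}"
  assumes minp: "\<And>q. prime q \<Longrightarrow> q dvd CARD('a) \<Longrightarrow> p \<le> q"
    and n: "n \<noteq> 0" "\<bar>n\<bar> < int p" and z: "zmul n g = 0"
  shows "g = 0"
proof -
  have g1: "gcd (nat \<bar>n\<bar>) CARD('a) = 1"
  proof (rule ccontr)
    assume "gcd (nat \<bar>n\<bar>) CARD('a) \<noteq> 1"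
    then obtain q where q: "prime q" "q dvd gcd (nat \<bar>n\<bar>) CARD('a)" using prime_factor_nat by blast
    then have q1: "q dvd CARD('a)" and q2: "q dvd nat \<bar>n\<bar>" using dvd_trans gcd_dvd1 gcd_dvd2 by blast+
    have "p \<le> q" using minp q(1) q1 by blast
    moreover have "0 < nat \<bar>n\<bar>" using n(1) by simp
    then have "q \<le> nat \<bar>n\<bar>" using dvd_imp_le[OF q2] by blast
    ultimately show False using n(2) by linarith
  qed
  have "gcd n (int CARD('a)) = int (gcd (nat \<bar>n\<bar>) (nat \<bar>int CARD('a)\<bar>))" by (rule gcd_int_def)
  then have "gcd n (int CARD('a)) = 1" using g1 by simp
  then obtain u v where uv: "u * n + v * int CARD('a) = 1" using bezout_int[of n "int CARD('a)"] by auto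
  have "g = zmul (u * n + v * int CARD('a)) g" using uv by simp
  also have "\<dots> = zmul u (zmul n g) + zmul v (zmul (int CARD('a)) g)" unfolding zmul_add zmul_mult ..
  also have "\<dots> = 0" unfolding z zmul_nat card_nmul_zero by simp
  finally show ?thesis .
qed



definition ax :: "'a::finite \<Rightarrow> real^'a" where "ax x = axis x 1"

definition relvecs :: "'a::{finite,ab_group_add} set \<Rightarrow> (real^'a::{finite,ab_group_add}) set" where
  "relvecs S = {ax a + ax b - ax c - ax d | a b c d. a \<in> S \<and> b \<in> S \<and> c \<in> S \<and> d \<in> S \<and> a + b = c + d}"

definition intvec :: "real^'a \<Rightarrow> bool" where "intvec v \<longleftrightarrow> (\<forall>y. v$y \<in> \<int>)"

definition Psi :: "real^'a::{finite,ab_group_add} \<Rightarrow> 'a" where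
  "Psi v = (\<Sum>y\<in>UNIV. zmul \<lfloor>v$y\<rfloor> y)"

lemma ax_nth: "(ax x)$y = (if y = x then 1 else 0)"
  unfolding ax_def axis_def by simp

lemma intvec_ax: "intvec (ax x)" unfolding intvec_def ax_nth by simp
lemma intvec_add: "intvec v \<Longrightarrow> intvec w \<Longrightarrow> intvec (v + w)" unfolding intvec_def by simp
lemma intvec_diff: "intvec v \<Longrightarrow> intvec w \<Longrightarrow> intvec (v - w)" unfolding intvec_def by simp

lemma floor_add_Ints: "x \<in> \<int> \<Longrightarrow> y \<in> \<int> \<Longrightarrow> \<lfloor>x + y\<rfloor> = \<lfloor>x\<rfloor> + \<lfloor>y\<rfloor>"
  by (metis Ints_cases floor_of_int of_int_add)
lemma floor_diff_Ints: "x \<in> \<int> \<Longrightarrow> y \<in> \<int> \<Longrightarrow> \<lfloor>x - y\<rfloor> = \<lfloor>x\<rfloor> - \<lfloor>y\<rfloor>"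
  by (metis Ints_cases floor_of_int of_int_diff)
lemma floor_mult_Ints: "x \<in> \<int> \<Longrightarrow> y \<in> \<int> \<Longrightarrow> \<lfloor>x * y\<rfloor> = \<lfloor>x\<rfloor> * \<lfloor>y\<rfloor>"
  by (metis Ints_cases floor_of_int of_int_mult)

lemma zmul_uminus: "zmul (-x) g = - zmul x g"
  unfolding zmul_def by simp
lemma zmul_diff_left: "zmul (x - y) g = zmul x g - zmul y g"
  using zmul_add[of x "-y" g] zmul_uminus[of y g] by simp

lemma Psi_add: "intvec v \<Longrightarrow> intvec w \<Longrightarrow> Psi (v + w) = Psi v + Psi w"
  unfolding Psi_def intvec_def by (simp add: floor_add_Ints zmul_add sum.distrib)
lemma Psi_diff: "intvec v \<Longrightarrow> intvec w \<Longrightarrow> Psi (v - w) = Psi v - Psi w"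
  unfolding Psi_def intvec_def by (simp add: floor_diff_Ints zmul_diff_left sum_subtractf)
lemma Psi_scale: "n \<in> \<int> \<Longrightarrow> intvec v \<Longrightarrow> Psi (n *\<^sub>R v) = zmul \<lfloor>n\<rfloor> (Psi v)"
  unfolding Psi_def intvec_def by (simp add: floor_mult_Ints zmul_mult zmul_sum)
lemma Psi_ax: "Psi (ax x) = x"
proof -
  have "Psi (ax x) = (\<Sum>y\<in>UNIV. if y = x then y else 0)"
    unfolding Psi_def ax_nth by (intro sum.cong) auto
  also have "\<dots> = x" by simp
  finally show ?thesis .
qed
lemma Psi_zero: "Psi 0 = 0" unfolding Psi_def by simp

lemma Psi_sum: "finite I \<Longrightarrow> (\<forall>i\<in>I. intvec (f i)) \<Longrightarrow> Psi (\<Sum>i\<in>I. f i) = (\<Sum>i\<in>I. Psi (f i))"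
proof (induction I rule: finite_induct)
  case empty then show ?case by (simp add: Psi_zero)
next
  case (insert i I)
  have "intvec (\<Sum>i\<in>I. f i)"
    using insert.hyps(1) insert.prems
    by (induction I rule: finite_induct) (auto simp: intvec_def intvec_add Ints_sum)
  then show ?case using insert by (simp add: Psi_add)
qed

lemma simplev_zero: "simplev 0" unfolding simplev_def by simp
lemma simplev_ax: "simplev (ax a)" unfolding simplev_def ax_nth by auto
lemma simplev_axdiff: "simplev (ax a - ax c)" unfolding simplev_def by (auto simp: ax_nth)
lemma Basis_ax: "v \<in> (Basis :: (real, 'a::finite) vec set) \<Longrightarrow> \<exists>i. v = ax i"
  unfolding Basis_vec_def ax_def by auto

lemma finite_relvecs: "finite (relvecs S)"
proof -
  have "relvecs S \<subseteq> (\<lambda>(a,b,c,d). ax a + ax b - ax c - ax d) ` UNIV"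
  proof
    fix r assume "r \<in> relvecs S"
    then obtain a b c d where "r = ax a + ax b - ax c - ax d" unfolding relvecs_def by blast
    then show "r \<in> (\<lambda>(a,b,c,d). ax a + ax b - ax c - ax d) ` UNIV"
      by (intro image_eqI[where x = "(a,b,c,d)"]) auto
  qed
  then show ?thesis by (rule finite_subset) simp
qed

lemma relvec_props:
  assumes "r \<in> relvecs S"
  shows "intvec r" "Psi r = 0" "\<exists>p q. simplev p \<and> simplev q \<and> r = p + q"
proof -
  obtain a b c d where r: "r = ax a + ax b - ax c - ax d" "a + b = c + d" using assms unfolding relvecs_def by blast
  show "intvec r" unfolding r(1) by (intro intvec_add intvec_diff intvec_ax)
  have "Psi r = a + b - c - d" unfolding r(1)
    by (simp add: Psi_add Psi_diff Psi_ax intvec_add intvec_diff intvec_ax)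
  also have "\<dots> = (a + b) - (c + d)" by (simp add: algebra_simps)
  also have "\<dots> = 0" unfolding r(2) by simp
  finally show "Psi r = 0" .
  have "r = (ax a - ax c) + (ax b - ax d)" unfolding r(1) by simp
  then show "\<exists>p q. simplev p \<and> simplev q \<and> r = p + q" using simplev_axdiff by blast
qed

lemma intvec_scale: "n \<in> \<int> \<Longrightarrow> intvec v \<Longrightarrow> intvec (n *\<^sub>R v)" unfolding intvec_def by simp

lemma core:
  fixes S :: "'a::{finite,ab_group_add} set"
  assumes nt: "\<And>n g. n \<noteq> 0 \<Longrightarrow> \<bar>n\<bar> \<le> 2^(card S - 1) \<Longrightarrow> zmul n g = 0 \<Longrightarrow> g = (0::'a)"
    and ac: "a \<in> S" "c \<in> S" "a \<noteq> c"
  shows "ax a - ax c \<notin> span (relvecs S)"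
proof
  assume w: "ax a - ax c \<in> span (relvecs S)"
  let ?R = "relvecs S"
  obtain B where B: "B \<subseteq> ?R" "independent B" "?R \<subseteq> span B" by (rule real_vector.maximal_independent_subset)
  have finB: "finite B" using B(1) finite_relvecs finite_subset by blast
  define T where "T = (\<lambda>x. ax x - ax a) ` (S - {a})"
  have RT: "?R \<subseteq> span T"
  proof
    fix r assume "r \<in> ?R"
    then obtain a' b' c' d' where r: "r = ax a' + ax b' - ax c' - ax d'" "a' \<in> S" "b' \<in> S" "c' \<in> S" "d' \<in> S"
      unfolding relvecs_def by blast
    have inT: "ax x - ax a \<in> span T" if "x \<in> S" for x
    proof (cases "x = a")
      case True then show ?thesis by (simp add: span_zero)
    next
      case False then show ?thesis using that unfolding T_def by (intro span_base) auto
    qed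
    have e: "r = (ax a' - ax a) + (ax b' - ax a) - (ax c' - ax a) - (ax d' - ax a)" using r(1) by simp
    show "r \<in> span T" unfolding e by (intro span_add span_diff inT r(2-5))
  qed
  have finT: "finite T" unfolding T_def by simp
  have BT: "B \<subseteq> span T" using B(1) RT by (rule subset_trans)
  have "card B \<le> card T"
    using real_vector.independent_span_bound[OF finT B(2) BT] by (rule conjunct2)
  also have "card T \<le> card (S - {a})" unfolding T_def by (rule card_image_le[OF finite_subset[OF subset_UNIV]]) simp
  also have "\<dots> = card S - 1" by (rule card_Diff_singleton[OF ac(1)])
  finally have cB: "card B \<le> card S - 1" .
  obtain B' where B': "B \<subseteq> B'" "B' \<subseteq> B \<union> Basis" "independent B'" "B \<union> Basis \<subseteq> span B'"
    by (rule real_vector.maximal_independent_subset_extend[OF Un_upper1 B(2)])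
  have sb: "B' \<subseteq> span Basis" by (simp add: span_Basis)
  have fc1: "finite B' \<and> card B' \<le> card (Basis :: (real, 'a) vec set)"
    by (rule real_vector.independent_span_bound[OF finite_Basis B'(3) sb])
  then have finB': "finite B'" and c1: "card B' \<le> card (Basis :: (real, 'a) vec set)" by auto
  have sb2: "(Basis :: (real, 'a) vec set) \<subseteq> span B'" using B'(4) by blast
  have c2: "card (Basis :: (real, 'a) vec set) \<le> card B'"
    using real_vector.independent_span_bound[OF finB' independent_Basis sb2] by blast
  have cBas: "card (Basis :: (real, 'a) vec set) = CARD('a)" by (simp add: DIM_cart)
  have "card (UNIV::'a set) = card B'" using c1 c2 cBas by simp
  then obtain g where g: "bij_betw g (UNIV::'a set) B'" using finite_same_card_bij[OF finite_class.finite_UNIV finB'] by blast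
  have ginj: "inj g" using g by (rule bij_betw_imp_inj_on)
  have grange: "range g = B'" using g by (rule bij_betw_imp_surj_on)
  define A :: "((real, 'a) vec, 'a) vec" where "A = (\<chi> i. g i)"
  have rowA: "row i A = g i" for i unfolding A_def row_def by (simp add: vec_eq_iff)
  have Aij: "A$i$j = g i $ j" for i j by (simp add: A_def)
  have detA: "det A \<noteq> 0"
  proof -
    have "\<forall>c. (\<Sum>i\<in>UNIV. c i *s row i A) = 0 \<longrightarrow> (\<forall>i. c i = 0)"
    proof (intro allI impI)
      fix c i assume c: "(\<Sum>i\<in>UNIV. c i *s row i A) = 0"
      define u where "u = c \<circ> inv_into UNIV g"
      have ug: "u (g k) = c k" for k unfolding u_def using ginj by simp
      have "(\<Sum>v\<in>B'. u v *\<^sub>R v) = (\<Sum>k\<in>UNIV. u (g k) *\<^sub>R g k)"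
        using sum.reindex_bij_betw[OF g, of "\<lambda>v. u v *\<^sub>R v"] by simp
      also have "\<dots> = (\<Sum>k\<in>UNIV. c k *s row k A)" by (simp add: ug rowA scalar_mult_eq_scaleR)
      finally have "(\<Sum>v\<in>B'. u v *\<^sub>R v) = 0" using c by simp
      then have "\<forall>v\<in>B'. u v = 0" using B'(3) real_vector.dependent_finite[OF finB'] by blast
      then show "c i = 0" using ug[of i] grange by auto
    qed
    then have "\<exists>M. A ** M = mat 1" using matrix_right_invertible_independent_rows by blast
    then have "invertible A" using invertible_right_inverse by blast
    then show ?thesis using invertible_det_nz by blast
  qed
  have "span ?R \<subseteq> span B" using B(3) by (simp add: real_vector.span_minimal)
  then have "ax a - ax c \<in> span B" using w by blast
  then obtain u where u: "ax a - ax c = (\<Sum>v\<in>B. u v *\<^sub>R v)"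
    using real_vector.span_finite[OF finB] by auto
  define x :: "(real, 'a) vec" where "x = (\<chi> i. if g i \<in> B then u (g i) else 0)"
  have Mx: "transpose A *v x = ax a - ax c"
  proof -
    have "transpose A *v x = (\<Sum>i\<in>UNIV. x$i *s column i (transpose A))" by (rule matrix_mult_sum)
    also have "\<dots> = (\<Sum>i\<in>UNIV. (if g i \<in> B then u (g i) else 0) *\<^sub>R g i)"
      by (simp add: column_transpose rowA x_def scalar_mult_eq_scaleR)
    also have "\<dots> = (\<Sum>v\<in>B'. (if v \<in> B then u v else 0) *\<^sub>R v)"
      using sum.reindex_bij_betw[OF g, of "\<lambda>v. (if v \<in> B then u v else 0) *\<^sub>R v"] by simp
    also have "\<dots> = (\<Sum>v\<in>B. u v *\<^sub>R v)"
      by (rule sum.mono_neutral_cong_right[OF finB' B'(1)]) auto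
    finally show ?thesis using u by simp
  qed
  have intg: "intvec (g i)" for i
  proof -
    have "g i \<in> B'" using grange by blast
    then have "g i \<in> B \<or> g i \<in> Basis" using B'(2) by blast
    then show ?thesis
    proof
      assume "g i \<in> B" then show ?thesis using B(1) relvec_props(1) by blast
    next
      assume "g i \<in> Basis"
      then obtain k where "g i = ax k" using Basis_ax by blast
      then show ?thesis using intvec_ax by simp
    qed
  qed
  define D where "D = det A"
  have intA: "\<forall>i j. A$i$j \<in> \<int>" using intg unfolding Aij intvec_def by blast
  have DZ: "D \<in> \<int>" unfolding D_def by (rule det_Ints[OF intA])
  have wint: "intvec (ax a - ax c)" by (intro intvec_diff intvec_ax)
  have xZ: "D * x$k \<in> \<int>" for k
  proof -
    have "det (\<chi> i j. if j = k then (transpose A *v x)$i else (transpose A)$i$j) = x$k * det (transpose A)"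
      by (rule cramer_lemma)
    moreover have "det (\<chi> i j. if j = k then (transpose A *v x)$i else (transpose A)$i$j) \<in> \<int>"
    proof (rule det_Ints, intro allI)
      fix i j
      have tA: "(transpose A)$i$j \<in> \<int>" using intA by (simp add: transpose_def)
      show "(\<chi> i j. if j = k then (transpose A *v x)$i else (transpose A)$i$j) $ i $ j \<in> \<int>"
        using wint tA unfolding Mx intvec_def by simp
    qed
    ultimately show ?thesis by (simp add: D_def det_transpose mult.commute)
  qed
  have uZ: "D * u v \<in> \<int>" if vB: "v \<in> B" for v
  proof -
    have "v \<in> range g" using vB B'(1) grange by blast
    then obtain k where k: "g k = v" by blast
    have "x$k = u v" using k vB by (simp add: x_def)
    then show ?thesis using xZ[of k] by simp
  qed
  have bound: "\<bar>D\<bar> \<le> 2 ^ card B"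
  proof -
    have "\<forall>v\<in>B. \<exists>pq. simplev (fst pq) \<and> simplev (snd pq) \<and> v = fst pq + snd pq"
      using B(1) relvec_props(3) by fastforce
    then obtain PQ where PQ: "\<forall>v\<in>B. simplev (fst (PQ v)) \<and> simplev (snd (PQ v)) \<and> v = fst (PQ v) + snd (PQ v)"
      by metis
    define I where "I = g -` B"
    have cI: "card I = card B" unfolding I_def using card_vimage_inj[OF ginj] B'(1) grange by simp
    have finI: "finite I" by simp
    have "\<bar>det A\<bar> \<le> 2 ^ card I"
    proof (rule expand_det[OF finI, of "\<lambda>i. if i \<in> I then fst (PQ (g i)) else 0" "\<lambda>i. if i \<in> I then snd (PQ (g i)) else 0"])
      show "\<forall>i. simplev (if i \<in> I then fst (PQ (g i)) else 0)" using PQ simplev_zero by (auto simp: I_def)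
      show "\<forall>i. simplev (if i \<in> I then snd (PQ (g i)) else 0)" using PQ simplev_zero by (auto simp: I_def)
      show "\<forall>i. (i \<in> I \<longrightarrow> A $ i = (if i \<in> I then fst (PQ (g i)) else 0) + (if i \<in> I then snd (PQ (g i)) else 0)) \<and>
         (i \<notin> I \<longrightarrow> simplev (A $ i))"
      proof (intro allI conjI impI)
        fix i assume "i \<in> I"
        then show "A $ i = (if i \<in> I then fst (PQ (g i)) else 0) + (if i \<in> I then snd (PQ (g i)) else 0)"
          using PQ by (simp add: A_def I_def)
      next
        fix i assume "i \<notin> I"
        then have "g i \<in> Basis" using B'(2) grange unfolding I_def by blast
        then obtain k where "g i = ax k" using Basis_ax by blast
        then show "simplev (A $ i)" using simplev_ax by (simp add: A_def)
      qed
    qed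
    then show ?thesis using cI by (simp add: D_def)
  qed
  have Dnz: "D \<noteq> 0" using detA by (simp add: D_def)
  have "D *\<^sub>R (ax a - ax c) = (\<Sum>v\<in>B. (D * u v) *\<^sub>R v)"
    unfolding u by (simp add: scaleR_sum_right)
  then have "Psi (D *\<^sub>R (ax a - ax c)) = Psi (\<Sum>v\<in>B. (D * u v) *\<^sub>R v)" by simp
  moreover have "Psi (D *\<^sub>R (ax a - ax c)) = zmul \<lfloor>D\<rfloor> (a - c)"
    using Psi_scale[OF DZ wint] by (simp add: Psi_diff Psi_ax intvec_ax)
  moreover have "Psi (\<Sum>v\<in>B. (D * u v) *\<^sub>R v) = 0"
  proof -
    have iv: "\<forall>v\<in>B. intvec ((D * u v) *\<^sub>R v)"
      using uZ B(1) relvec_props(1) intvec_scale by blast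
    have "Psi (\<Sum>v\<in>B. (D * u v) *\<^sub>R v) = (\<Sum>v\<in>B. Psi ((D * u v) *\<^sub>R v))"
      by (rule Psi_sum[OF finB iv])
    also have "\<dots> = (\<Sum>v\<in>B. zmul \<lfloor>D * u v\<rfloor> (Psi v))"
    proof (rule sum.cong[OF refl])
      fix v assume vB: "v \<in> B"
      have "intvec v" using vB B(1) relvec_props(1) by blast
      then show "Psi ((D * u v) *\<^sub>R v) = zmul \<lfloor>D * u v\<rfloor> (Psi v)" using Psi_scale uZ[OF vB] by blast
    qed
    also have "\<dots> = 0"
    proof (rule sum.neutral, intro ballI)
      fix v assume "v \<in> B"
      then have "Psi v = 0" using B(1) relvec_props(2) by blast
      then show "zmul \<lfloor>D * u v\<rfloor> (Psi v) = 0" by simp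
    qed
    finally show ?thesis .
  qed
  ultimately have z: "zmul \<lfloor>D\<rfloor> (a - c) = 0" by simp
  obtain z0 where z0: "D = of_int z0" using DZ Ints_cases by blast
  have "z0 \<noteq> 0" using Dnz z0 by simp
  moreover have "\<bar>z0\<bar> \<le> 2 ^ (card S - 1)"
  proof -
    have pw: "(2::real) ^ card B \<le> 2 ^ (card S - 1)" by (rule power_increasing[OF cB]) simp
    have "\<bar>real_of_int z0\<bar> \<le> 2 ^ (card S - 1)"
      using bound z0 pw by linarith
    then show ?thesis by (metis of_int_abs of_int_le_iff of_int_numeral of_int_power)
  qed
  moreover have "zmul z0 (a - c) = 0" using z z0 by simp
  ultimately have "a - c = 0" using nt by blast
  then show False using ac(3) by simp
qed



lemma inner_ax: "\<phi> \<bullet> ax x = \<phi>$x"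
  unfolding ax_def by (simp add: cart_eq_inner_axis)

lemma separate:
  fixes R :: "(real^'n) set"
  assumes "w \<notin> span R"
  shows "\<exists>\<phi>. (\<forall>r\<in>R. \<phi> \<bullet> r = 0) \<and> \<phi> \<bullet> w \<noteq> 0"
proof -
  obtain y z where yz: "y \<in> span R" "\<And>v. v \<in> span R \<Longrightarrow> orthogonal z v" "w = y + z"
    by (rule orthogonal_subspace_decomp_exists[of R w]) blast
  have "z \<noteq> 0" using yz(1,3) assms by auto
  then have zz: "z \<bullet> z \<noteq> 0" by simp
  have "z \<bullet> y = 0" using yz(2)[OF yz(1)] by (simp add: orthogonal_def)
  then have "z \<bullet> w \<noteq> 0" using zz yz(3) by (simp add: inner_add_right)
  moreover have "\<forall>r\<in>R. z \<bullet> r = 0" using yz(2) span_base by (auto simp: orthogonal_def)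
  ultimately show ?thesis by blast
qed

lemma generic:
  fixes W :: "(real^'n) set"
  assumes "finite P" and sub: "\<And>\<phi> \<psi> t. \<phi> \<in> W \<Longrightarrow> \<psi> \<in> W \<Longrightarrow> \<phi> + t *\<^sub>R \<psi> \<in> W" and W0: "0 \<in> W"
  shows "(\<forall>(x,y)\<in>P. \<exists>\<phi>\<in>W. \<phi>$x \<noteq> \<phi>$y) \<Longrightarrow> \<exists>\<phi>\<in>W. \<forall>(x,y)\<in>P. \<phi>$x \<noteq> \<phi>$y"
  using assms(1)
proof (induction P rule: finite_induct)
  case empty then show ?case using W0 by blast
next
  case (insert pr P)
  obtain x0 y0 where pr: "pr = (x0,y0)" by (cases pr)
  from insert.IH insert.prems obtain \<phi> where \<phi>: "\<phi> \<in> W" "\<forall>(x,y)\<in>P. \<phi>$x \<noteq> \<phi>$y" by auto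
  from insert.prems pr obtain \<psi> where \<psi>: "\<psi> \<in> W" "\<psi>$x0 \<noteq> \<psi>$y0" by auto
  define bad where "bad = (\<lambda>(x,y). (\<phi>$y - \<phi>$x) / (\<psi>$x - \<psi>$y)) ` insert pr P"
  have "finite bad" unfolding bad_def using insert.hyps(1) by simp
  then obtain t where t: "t \<notin> bad" using ex_new_if_finite[OF infinite_UNIV_char_0] by blast
  define \<xi> where "\<xi> = \<phi> + t *\<^sub>R \<psi>"
  have "\<xi> \<in> W" unfolding \<xi>_def using sub \<phi>(1) \<psi>(1) by blast
  moreover have "\<xi>$x \<noteq> \<xi>$y" if xy: "(x,y) \<in> insert pr P" for x y
  proof
    assume eq: "\<xi>$x = \<xi>$y"
    show False
    proof (cases "\<psi>$x = \<psi>$y")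
      case True
      then have "\<phi>$x = \<phi>$y" using eq by (simp add: \<xi>_def)
      moreover have "(x,y) \<in> P" using xy True \<psi>(2) pr by auto
      ultimately show False using \<phi>(2) by auto
    next
      case False
      have "\<phi>$x + t * \<psi>$x = \<phi>$y + t * \<psi>$y" using eq by (simp add: \<xi>_def)
      then have "t * (\<psi>$x - \<psi>$y) = \<phi>$y - \<phi>$x" by (simp add: algebra_simps)
      then have "t = (\<phi>$y - \<phi>$x) / (\<psi>$x - \<psi>$y)" using False by (simp add: field_simps)
      then have "t \<in> bad" unfolding bad_def using xy by force
      then show False using t by simp
    qed
  qed
  ultimately show ?case by blast
qed

lemma argmax_exists:
  fixes f :: "'b \<Rightarrow> real"
  assumes "finite X" "X \<noteq> {}"
  shows "\<exists>x. x \<in> X \<and> (\<forall>y\<in>X. f y \<le> f x)"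
proof -
  have "Max (f ` X) \<in> f ` X" using assms by simp
  then obtain x where x: "x \<in> X" "f x = Max (f ` X)" by auto
  have "\<forall>y\<in>X. f y \<le> f x" using x(2) assms(1) by simp
  then show ?thesis using x(1) by blast
qed

theorem lemma5p5:
  fixes S :: "'a :: {finite, ab_group_add} set"
  assumes "card (UNIV :: 'a set) > 1"
    and "real (card S) \<le> log 2 (real (smallest_prime_factor (card (UNIV :: 'a set))))"
  shows "\<exists>s :: 'a set \<Rightarrow> 'a.
           (\<forall>X. X \<subseteq> S \<and> X \<noteq> {} \<longrightarrow> s X \<in> X) \<and>
           (\<forall>X Y. X \<subseteq> S \<and> X \<noteq> {} \<and> Y \<subseteq> S \<and> Y \<noteq> {} \<longrightarrow>
              (\<forall>x\<in>X. \<forall>y\<in>Y. x + y = s X + s Y \<longrightarrow> x = s X \<and> y = s Y))"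
proof -
  define N where "N = card (UNIV :: 'a set)"
  define p where "p = smallest_prime_factor N"
  have "\<exists>q. prime q \<and> q dvd N" using assms(1) prime_factor_nat[of N] unfolding N_def by auto
  then have pp: "prime p \<and> p dvd N" unfolding p_def smallest_prime_factor_def by (rule LeastI_ex)
  have minp: "\<And>q. prime q \<Longrightarrow> q dvd CARD('a) \<Longrightarrow> p \<le> q"
    unfolding p_def smallest_prime_factor_def N_def by (rule Least_le) simp
  have p2: "p \<ge> 2" using pp prime_ge_2_nat by blast
  have "(2::real) powr real (card S) \<le> real p"
    using assms(2) p2 unfolding p_def N_def by (subst (asm) le_log_iff) auto
  then have "(2::real) ^ card S \<le> real p" by (simp add: powr_realpow)
  then have pk: "2 ^ card S \<le> p" by (metis of_nat_le_iff of_nat_numeral of_nat_power)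
  have small: "(2::nat) ^ (card S - 1) < p"
  proof (cases "card S")
    case 0 then show ?thesis using p2 by simp
  next
    case (Suc m)
    have a: "2 * 2 ^ m \<le> p" using pk Suc by simp
    have b: "(1::nat) \<le> 2 ^ m" by simp
    have c: "card S - 1 = m" using Suc by simp
    show ?thesis unfolding c using a b by linarith
  qed
  have nt: "\<And>n g. n \<noteq> 0 \<Longrightarrow> \<bar>n\<bar> \<le> 2^(card S - 1) \<Longrightarrow> zmul n g = 0 \<Longrightarrow> g = (0::'a)"
  proof -
    fix n :: int and g :: 'a
    assume n: "n \<noteq> 0" "\<bar>n\<bar> \<le> 2^(card S - 1)" "zmul n g = 0"
    have "\<bar>n\<bar> < int p" using n(2) small by (metis of_nat_less_iff of_nat_numeral of_nat_power order.strict_trans1)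
    then show "g = 0" using no_small_torsion[OF minp n(1) _ n(3)] by blast
  qed
  define W where "W = {\<phi> :: (real, 'a) vec. \<forall>r\<in>relvecs S. \<phi> \<bullet> r = 0}"
  define P where "P = {(a,c). a \<in> S \<and> c \<in> S \<and> a \<noteq> c}"
  have "\<forall>(x,y)\<in>P. \<exists>\<phi>\<in>W. \<phi>$x \<noteq> \<phi>$y"
  proof (clarsimp simp: P_def)
    fix a c assume ac: "a \<in> S" "c \<in> S" "a \<noteq> c"
    obtain \<phi> where \<phi>: "\<forall>r\<in>relvecs S. \<phi> \<bullet> r = 0" "\<phi> \<bullet> (ax a - ax c) \<noteq> 0"
    proof -
      have "ax a - ax c \<notin> span (relvecs S)" by (rule core) (use nt ac in auto)
      then show ?thesis using separate that by blast
    qed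
    then have "\<phi> \<in> W" "\<phi>$a \<noteq> \<phi>$c" unfolding W_def by (auto simp: inner_diff_right inner_ax)
    then show "\<exists>\<phi>\<in>W. \<phi>$a \<noteq> \<phi>$c" by blast
  qed
  moreover have "finite P" by simp
  moreover have "\<phi> + t *\<^sub>R \<psi> \<in> W" if "\<phi> \<in> W" "\<psi> \<in> W" for \<phi> \<psi> t
    using that unfolding W_def by (simp add: inner_add_left)
  moreover have "0 \<in> W" unfolding W_def by simp
  ultimately obtain \<phi> where \<phi>: "\<phi> \<in> W" "\<forall>(x,y)\<in>P. \<phi>$x \<noteq> \<phi>$y"
    using generic[of P W] by blast
  have inj: "x = y" if "x \<in> S" "y \<in> S" "\<phi>$x = \<phi>$y" for x y
    using \<phi>(2) that unfolding P_def by auto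
  have frei: "\<phi>$a + \<phi>$b = \<phi>$c + \<phi>$d" if "a \<in> S" "b \<in> S" "c \<in> S" "d \<in> S" "a + b = c + d" for a b c d
  proof -
    have "ax a + ax b - ax c - ax d \<in> relvecs S" unfolding relvecs_def using that by blast
    then have "\<phi> \<bullet> (ax a + ax b - ax c - ax d) = 0" using \<phi>(1) unfolding W_def by blast
    then show ?thesis by (simp add: inner_add_right inner_diff_right inner_ax)
  qed
  define s where "s X = (SOME x. x \<in> X \<and> (\<forall>y\<in>X. \<phi>$y \<le> \<phi>$x))" for X
  have sX: "s X \<in> X \<and> (\<forall>y\<in>X. \<phi>$y \<le> \<phi>$(s X))" if "X \<subseteq> S" "X \<noteq> {}" for X
  proof -
    have "\<exists>x. x \<in> X \<and> (\<forall>y\<in>X. \<phi>$y \<le> \<phi>$x)" by (rule argmax_exists) (use that in auto)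
    then show ?thesis by (unfold s_def) (rule someI_ex)
  qed
  show ?thesis
  proof (rule exI[of _ s], rule conjI)
    show "\<forall>X. X \<subseteq> S \<and> X \<noteq> {} \<longrightarrow> s X \<in> X" using sX by blast
  next
    show "\<forall>X Y. X \<subseteq> S \<and> X \<noteq> {} \<and> Y \<subseteq> S \<and> Y \<noteq> {} \<longrightarrow>
              (\<forall>x\<in>X. \<forall>y\<in>Y. x + y = s X + s Y \<longrightarrow> x = s X \<and> y = s Y)"
  proof (intro allI impI ballI)
    fix X Y x y
    assume XY: "X \<subseteq> S \<and> X \<noteq> {} \<and> Y \<subseteq> S \<and> Y \<noteq> {}" and xy: "x \<in> X" "y \<in> Y" "x + y = s X + s Y"
    have sx: "s X \<in> X" "\<phi>$x \<le> \<phi>$(s X)" using sX[of X] XY xy by auto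
    have sy: "s Y \<in> Y" "\<phi>$y \<le> \<phi>$(s Y)" using sX[of Y] XY xy by auto
    have inS: "x \<in> S" "y \<in> S" "s X \<in> S" "s Y \<in> S" using XY xy sx sy by auto
    have "\<phi>$x + \<phi>$y = \<phi>$(s X) + \<phi>$(s Y)" by (rule frei[OF inS xy(3)])
    then have "\<phi>$x = \<phi>$(s X)" "\<phi>$y = \<phi>$(s Y)" using sx sy by linarith+
    then show "x = s X \<and> y = s Y" using inj inS by blast
  qed
  qed
qed

end
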